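(* Let $\mathcal{G}$ be a class of graphs of unbounded average degree, and let $\mathcal{A}$ be the class of all (unweighted) orientations of graphs in $\mathcal{G}$. Then $\mathcal{A}$ is not size-pliable.
   Context: An orientation of a graph is viewed as a structure over the signature $\{e\}$ with one binary symbol, where $e^{\mathbb{A}}(u,v)=1$ if $u\to v$ is an arc and $0$ otherwise. For structures $\mathbb{A},\mathbb{B}$ over a signature $\sigma$ (finite domain with functions $f^{\mathbb{A}}\colon A^{\mathrm{ar}(f)}\to\mathbb{Q}_{\ge0}$), $\mathrm{opt}(\mathbb{A},\mathbb{B})=\max_{h\colon A\to B}\sum_f\sum_{\bar x}f^{\mathbb{A}}(\bar x)f^{\mathbb{B}}(h(\bar x))$ over all maps, and $d_{\mathrm{opt}}(\mathbb{A},\mathbb{B})=\sup_{\mathbb{C}}|\ln\mathrm{opt}(\mathbb{A},\mathbb{C})-\ln\mathrm{opt}(\mathbb{B},\mathbb{C})|$ over all $\sigma$-structures $\mathbb{C}$ ($\ln0=-\infty$, $|\ln0-\ln0|=0$). A class $\mathcal{A}$ is size-pliable if for every $\varepsilon>0$ there is $k$ such that every $\mathbb{A}\in\mathcal{A}$ (signature $\sigma$) has a $\sigma$-structure $\mathbb{B}$ with domain of size at most $k$ and $d_{\mathrm{opt}}(\mathbb{A},\mathbb{B})\le\varepsilon$. *)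

theory Defs
  imports Complex_Main "HOL-Library.FuncSet" "HOL-Library.Extended_Real"
begin

text \<open>A structure over the signature with one binary function symbol e:
  a finite nonempty domain (of natural numbers) and e :: domain^2 -> Q_{>=0}.\<close>
type_synonym struct = "nat set \<times> (nat \<Rightarrow> nat \<Rightarrow> rat)"

definition dom_s :: "struct \<Rightarrow> nat set" where "dom_s S = fst S"
definition e_s :: "struct \<Rightarrow> nat \<Rightarrow> nat \<Rightarrow> rat" where "e_s S = snd S"

definition is_struct :: "struct \<Rightarrow> bool" where
  "is_struct S \<longleftrightarrow> finite (dom_s S) \<and> dom_s S \<noteq> {} \<and>
     (\<forall>x\<in>dom_s S. \<forall>y\<in>dom_s S. e_s S x y \<ge> 0)"

definition opt :: "struct \<Rightarrow> struct \<Rightarrow> real" where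
  "opt A B = Max ((\<lambda>h. real_of_rat (\<Sum>(x,y)\<in>dom_s A \<times> dom_s A.
                        e_s A x y * e_s B (h x) (h y)))
                  ` (dom_s A \<rightarrow>\<^sub>E dom_s B))"

text \<open>|ln a - ln b| with ln 0 = -infinity and |ln 0 - ln 0| = 0.\<close>
definition lndist :: "real \<Rightarrow> real \<Rightarrow> ereal" where
  "lndist a b = (if a = 0 \<and> b = 0 then 0
                 else if a = 0 \<or> b = 0 then \<infinity>
                 else ereal \<bar>ln a - ln b\<bar>)"

definition d_opt :: "struct \<Rightarrow> struct \<Rightarrow> ereal" where
  "d_opt A B = (SUP C \<in> {C. is_struct C}. lndist (opt A C) (opt B C))"

definition size_pliable :: "struct set \<Rightarrow> bool" where
  "size_pliable \<A> \<longleftrightarrow> (\<forall>\<epsilon>::real. \<epsilon> > 0 \<longrightarrow> (\<exists>k::nat. \<forall>A\<in>\<A>. \<exists>B.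
      is_struct B \<and> card (dom_s B) \<le> k \<and> d_opt A B \<le> ereal \<epsilon>))"

type_synonym graph = "nat set \<times> nat set set"

definition is_graph :: "graph \<Rightarrow> bool" where
  "is_graph G \<longleftrightarrow> finite (fst G) \<and> (\<forall>e\<in>snd G. e \<subseteq> fst G \<and> card e = 2)"

definition avg_degree :: "graph \<Rightarrow> real" where
  "avg_degree G = 2 * real (card (snd G)) / real (card (fst G))"

definition unbounded_avg_degree :: "graph set \<Rightarrow> bool" where
  "unbounded_avg_degree \<G> \<longleftrightarrow> (\<forall>d::real. \<exists>G\<in>\<G>. avg_degree G > d)"

definition is_orientation :: "struct \<Rightarrow> graph \<Rightarrow> bool" where
  "is_orientation A G \<longleftrightarrow> dom_s A = fst G \<and>
     (\<forall>u\<in>fst G. \<forall>v\<in>fst G. e_s A u v \<in> {0, 1}) \<and>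
     (\<forall>u\<in>fst G. \<forall>v\<in>fst G. {u, v} \<notin> snd G \<longrightarrow> e_s A u v = 0) \<and>
     (\<forall>u\<in>fst G. \<forall>v\<in>fst G. {u, v} \<in> snd G \<longrightarrow> e_s A u v + e_s A v u = 1)"

definition orientations :: "graph set \<Rightarrow> struct set" where
  "orientations \<G> = {A. \<exists>G\<in>\<G>. is_orientation A G}"

end

theory Submission imports Defs "HOL-Library.Nat_Bijection" begin

fun TT :: "nat \<Rightarrow> nat" where
  "TT 0 = 1" | "TT (Suc k) = 2 ^ (TT k + 1)"

lemma TT_pos: "TT k > 0" by (cases k) auto

definition uu :: "nat \<Rightarrow> nat \<Rightarrow> nat" where
  "uu x y = (if (x < y \<and> x \<in> set_decode y) \<or> (y < x \<and> y \<notin> set_decode x) then 1 else 0)"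

lemma uu_sum: "uu x y + uu y x \<le> 1"
  unfolding uu_def by auto

lemma uu_le: "uu x y \<le> 1"
  unfolding uu_def by auto

lemma set_encode_lt:
  assumes "X \<subseteq> {..<n}" shows "set_encode X < 2 ^ n"
proof -
  have f: "finite X" using assms finite_subset by blast
  have "set_encode X \<le> set_encode {..<n}"
    unfolding set_encode_def using assms by (intro sum_mono2) auto
  also have "set_encode {..<n} < 2 ^ n"
    by (induction n) (auto simp: set_encode_def lessThan_Suc)
  finally show ?thesis .
qed

lemma universal:
  "finite S \<Longrightarrow> card S \<le> k \<Longrightarrow>
   (\<forall>x y. R x y \<longrightarrow> x \<in> S \<and> y \<in> S \<and> x \<noteq> y \<and> \<not> R y x) \<Longrightarrow>
   \<exists>g. inj_on g S \<and> g ` S \<subseteq> {..<TT k} \<and> (\<forall>x\<in>S. \<forall>y\<in>S. R x y \<longrightarrow> uu (g x) (g y) = 1)"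
proof (induction k arbitrary: S R)
  case 0
  then show ?case by auto
next
  case (Suc k)
  show ?case
  proof (cases "S = {}")
    case True
    then show ?thesis by auto
  next
    case False
    then obtain s where s: "s \<in> S" by blast
    define S' where "S' = S - {s}"
    define R' where "R' = (\<lambda>x y. R x y \<and> x \<in> S' \<and> y \<in> S')"
    have fS': "finite S'" using Suc.prems S'_def by auto
    have cS': "card S' \<le> k" using Suc.prems s S'_def by (simp add: card_Diff_singleton)
    have "\<forall>x y. R' x y \<longrightarrow> x \<in> S' \<and> y \<in> S' \<and> x \<noteq> y \<and> \<not> R' y x"
      using Suc.prems(3) R'_def by blast
    from Suc.IH[OF fS' cS' this] obtain g' where
      g'inj: "inj_on g' S'" and g'rng: "g' ` S' \<subseteq> {..<TT k}" and
      g'R: "\<forall>x\<in>S'. \<forall>y\<in>S'. R' x y \<longrightarrow> uu (g' x) (g' y) = 1" by blast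
    define Y where "Y = g' ` {a\<in>S'. R a s}"
    define X where "X = insert (TT k) Y"
    have fY: "finite Y" using fS' Y_def by auto
    have Ylt: "Y \<subseteq> {..<TT k}" using g'rng Y_def by auto
    have nY: "TT k \<notin> Y" using Ylt by auto
    define v where "v = set_encode X"
    have v_eq: "v = 2 ^ TT k + set_encode Y" using v_def X_def fY nY by simp
    have v_gt: "TT k < v" using v_eq less_exp[of "TT k"] by linarith
    have XS: "X \<subseteq> {..<TT k + 1}" using Ylt X_def by auto
    have v_lt: "v < TT (Suc k)" using set_encode_lt[OF XS] v_def by simp
    have decv: "set_decode v = X" using v_def X_def fY by simp
    define g where "g = g'(s := v)"
    have gS': "\<And>x. x \<in> S' \<Longrightarrow> g x = g' x" using g_def S'_def by auto
    have gs: "g s = v" using g_def by simp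
    have g'lt: "\<And>x. x \<in> S' \<Longrightarrow> g' x < TT k" using g'rng by auto
    have SS: "S = insert s S'" using s S'_def by auto
    have sS': "s \<notin> S'" using S'_def by auto
    have memY: "\<And>a. a \<in> S' \<Longrightarrow> g' a \<in> X \<longleftrightarrow> R a s"
    proof -
      fix a assume a: "a \<in> S'"
      have "g' a \<in> X \<longleftrightarrow> g' a \<in> Y" using X_def g'lt[OF a] by auto
      also have "\<dots> \<longleftrightarrow> R a s"
        using a g'inj unfolding Y_def inj_on_def by auto
      finally show "g' a \<in> X \<longleftrightarrow> R a s" .
    qed
    have inj: "inj_on g S"
    proof -
      have "inj_on g S'" using g'inj gS' by (metis inj_on_cong)
      moreover have "g s \<notin> g ` S'" using gS' g'lt gs v_gt by force
      ultimately show ?thesis using SS sS' by simp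
    qed
    have rng: "g ` S \<subseteq> {..<TT (Suc k)}"
    proof -
      have "TT k < 2 ^ TT k" by simp
      moreover have "2 ^ TT k \<le> TT (Suc k)" by simp
      ultimately have "TT k < TT (Suc k)" by linarith
      then show ?thesis using SS gs v_lt gS' g'lt by force
    qed
    have RR: "\<forall>x\<in>S. \<forall>y\<in>S. R x y \<longrightarrow> uu (g x) (g y) = 1"
    proof (intro ballI impI)
      fix x y assume x: "x \<in> S" and y: "y \<in> S" and r: "R x y"
      have nxy: "x \<noteq> y" and nr: "\<not> R y x" using Suc.prems(3) r by auto
      show "uu (g x) (g y) = 1"
      proof (cases "x = s")
        case True
        then have yS': "y \<in> S'" using nxy y S'_def by auto
        have "g' y \<notin> X" using memY[OF yS'] nr True by simp
        moreover have "g' y < v" using g'lt[OF yS'] v_gt by simp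
        ultimately show ?thesis using True gs gS'[OF yS'] decv unfolding uu_def by auto
      next
        case False
        then have xS': "x \<in> S'" using x S'_def by auto
        show ?thesis
        proof (cases "y = s")
          case True
          have "g' x \<in> X" using memY[OF xS'] r True by simp
          moreover have "g' x < v" using g'lt[OF xS'] v_gt by simp
          ultimately show ?thesis using True gs gS'[OF xS'] decv unfolding uu_def by auto
        next
          case False
          then have yS': "y \<in> S'" using y S'_def by auto
          then show ?thesis using g'R xS' r R'_def gS' by auto
        qed
      qed
    qed
    show ?thesis using inj rng RR by blast
  qed
qed

lemma count_exp:
  assumes "finite E" "\<forall>e\<in>E. s e True + s e False \<le> (1::nat)"
  shows "(\<Sum>\<sigma>\<in>PiE E (\<lambda>_. UNIV). (2::nat) ^ (\<Sum>e\<in>E. s e (\<sigma> e))) \<le> 3 ^ card E"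
proof -
  have "(\<Sum>\<sigma>\<in>PiE E (\<lambda>_. UNIV). (2::nat) ^ (\<Sum>e\<in>E. s e (\<sigma> e)))
      = (\<Sum>\<sigma>\<in>PiE E (\<lambda>_. UNIV). \<Prod>e\<in>E. (2::nat) ^ s e (\<sigma> e))"
    by (simp add: power_sum)
  also have "\<dots> = (\<Prod>e\<in>E. \<Sum>b\<in>(UNIV::bool set). (2::nat) ^ s e b)"
    by (rule prod_sum_PiE[symmetric]) (use assms in auto)
  also have "\<dots> \<le> (\<Prod>e\<in>E. (3::nat))"
  proof (rule prod_mono)
    fix e assume e: "e \<in> E"
    have "s e True + s e False \<le> 1" using assms e by auto
    then have "(2::nat) ^ s e True + 2 ^ s e False \<le> 3"
      by (cases "s e True"; cases "s e False") auto
    then show "0 \<le> (\<Sum>b\<in>(UNIV::bool set). (2::nat) ^ s e b) \<and> (\<Sum>b\<in>(UNIV::bool set). (2::nat) ^ s e b) \<le> 3"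
      by (simp add: UNIV_bool add.commute)
  qed
  finally show ?thesis by simp
qed

lemma count_bad:
  assumes "finite E" "\<forall>e\<in>E. s e True + s e False \<le> (1::nat)"
  shows "card {\<sigma>\<in>PiE E (\<lambda>_. UNIV). a \<le> (\<Sum>e\<in>E. s e (\<sigma> e))} * 2 ^ a \<le> 3 ^ card E"
proof -
  let ?B = "{\<sigma>\<in>PiE E (\<lambda>_. UNIV). a \<le> (\<Sum>e\<in>E. s e (\<sigma> e))}"
  have fin: "finite (PiE E (\<lambda>_. UNIV::bool set))" using assms by (simp add: finite_PiE)
  have "card ?B * 2 ^ a = (\<Sum>\<sigma>\<in>?B. (2::nat) ^ a)" by simp
  also have "\<dots> \<le> (\<Sum>\<sigma>\<in>?B. (2::nat) ^ (\<Sum>e\<in>E. s e (\<sigma> e)))"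
    by (intro sum_mono power_increasing) auto
  also have "\<dots> \<le> (\<Sum>\<sigma>\<in>PiE E (\<lambda>_. UNIV). (2::nat) ^ (\<Sum>e\<in>E. s e (\<sigma> e)))"
    by (intro sum_mono2 fin) auto
  also have "\<dots> \<le> 3 ^ card E" by (rule count_exp[OF assms])
  finally show ?thesis .
qed


definition orient :: "nat set set \<Rightarrow> (nat set \<Rightarrow> bool) \<Rightarrow> nat \<Rightarrow> nat \<Rightarrow> rat" where
  "orient E \<sigma> x y = (if {x, y} \<in> E \<and> \<sigma> {x, y} = (x < y) then 1 else 0)"

lemma conv:
  assumes fV: "finite V" and E: "\<forall>e\<in>E. e \<subseteq> V \<and> card e = 2"
  shows "(\<Sum>(x,y)\<in>V \<times> V. orient E \<sigma> x y * F x y) =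
         (\<Sum>e\<in>E. if \<sigma> e then F (Min e) (Max e) else F (Max e) (Min e))"
proof -
  have fE: "finite E" using E fV by (meson Pow_iff finite_Pow_iff rev_finite_subset subsetI)
  let ?f = "\<lambda>p. orient E \<sigma> (fst p) (snd p) * F (fst p) (snd p)"
  let ?P = "{p\<in>V \<times> V. {fst p, snd p} \<in> E}"
  have "(\<Sum>(x,y)\<in>V \<times> V. orient E \<sigma> x y * F x y) = (\<Sum>p\<in>V \<times> V. ?f p)"
    by (simp add: case_prod_beta)
  also have "\<dots> = (\<Sum>p\<in>?P. ?f p)"
    by (rule sum.mono_neutral_right) (use fV in \<open>auto simp: orient_def\<close>)
  also have "\<dots> = (\<Sum>e\<in>E. \<Sum>p\<in>{p. p \<in> ?P \<and> {fst p, snd p} = e}. ?f p)"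
    by (rule sum.group[symmetric]) (use fV fE in auto)
  also have "\<dots> = (\<Sum>e\<in>E. if \<sigma> e then F (Min e) (Max e) else F (Max e) (Min e))"
  proof (rule sum.cong[OF refl])
    fix e assume e: "e \<in> E"
    then obtain a b where ab: "e = {a, b}" "a \<noteq> b" using E card_2_iff by metis
    define x where "x = min a b"
    define y where "y = max a b"
    have exy: "e = {x, y}" and xy: "x < y" using ab x_def y_def by (auto simp: min_def max_def)
    have xyV: "x \<in> V" "y \<in> V" using E e exy by auto
    have set: "{p. p \<in> ?P \<and> {fst p, snd p} = e} = {(x, y), (y, x)}"
      using xyV e exy by (auto simp: doubleton_eq_iff insert_commute)
    have mm: "Min e = x" "Max e = y" using exy xy by auto
    have yx: "{y, x} = e" using exy by auto
    show "(\<Sum>p\<in>{p. p \<in> ?P \<and> {fst p, snd p} = e}. ?f p) =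
          (if \<sigma> e then F (Min e) (Max e) else F (Max e) (Min e))"
      using xy unfolding set mm by (auto simp: orient_def exy[symmetric] yx e)
  qed
  finally show ?thesis .
qed

lemma opt_ge:
  assumes "finite (dom_s X)" "finite (dom_s C)" "h \<in> dom_s X \<rightarrow>\<^sub>E dom_s C"
  shows "real_of_rat (\<Sum>(x,y)\<in>dom_s X \<times> dom_s X. e_s X x y * e_s C (h x) (h y)) \<le> opt X C"
  unfolding opt_def using assms by (intro Max_ge) (auto simp: finite_PiE)

lemma opt_attained:
  assumes "finite (dom_s X)" "finite (dom_s C)" "dom_s C \<noteq> {}"
  shows "\<exists>h\<in>dom_s X \<rightarrow>\<^sub>E dom_s C. opt X C =
           real_of_rat (\<Sum>(x,y)\<in>dom_s X \<times> dom_s X. e_s X x y * e_s C (h x) (h y))"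
proof -
  have ne: "dom_s X \<rightarrow>\<^sub>E dom_s C \<noteq> {}" using assms by (simp add: PiE_eq_empty_iff)
  have "opt X C \<in> (\<lambda>h. real_of_rat (\<Sum>(x,y)\<in>dom_s X \<times> dom_s X. e_s X x y * e_s C (h x) (h y)))
                     ` (dom_s X \<rightarrow>\<^sub>E dom_s C)"
    unfolding opt_def using assms ne by (intro Max_in) (auto simp: finite_PiE)
  then show ?thesis by auto
qed

lemma opt_nonneg:
  assumes "is_struct X" "is_struct C"
  shows "0 \<le> opt X C"
proof -
  obtain h where h: "h \<in> dom_s X \<rightarrow>\<^sub>E dom_s C"
    using assms unfolding is_struct_def by (metis PiE_eq_empty_iff ex_in_conv)
  have "0 \<le> real_of_rat (\<Sum>(x,y)\<in>dom_s X \<times> dom_s X. e_s X x y * e_s C (h x) (h y))"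
    using assms h unfolding is_struct_def
    by (auto intro!: sum_nonneg simp: PiE_iff)
  also have "\<dots> \<le> opt X C" using assms h unfolding is_struct_def by (intro opt_ge) auto
  finally show ?thesis .
qed

lemma lndist_1:
  assumes "a > 0" "b \<ge> 0" "lndist a b \<le> ereal \<epsilon>"
  shows "b > 0 \<and> exp (- \<epsilon>) * a \<le> b"
proof -
  have "b \<noteq> 0" using assms unfolding lndist_def by auto
  then have b: "b > 0" using assms by auto
  have "\<bar>ln a - ln b\<bar> \<le> \<epsilon>" using assms b unfolding lndist_def by auto
  then have "ln a - \<epsilon> \<le> ln b" by linarith
  then have "exp (ln a - \<epsilon>) \<le> exp (ln b)" by simp
  then have "exp (- \<epsilon>) * a \<le> b" using assms b by (simp add: exp_diff exp_minus field_simps)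
  then show ?thesis using b by simp
qed

lemma lndist_2:
  assumes "b > 0" "a \<ge> 0" "lndist a b \<le> ereal \<epsilon>"
  shows "exp (- \<epsilon>) * b \<le> a"
proof -
  have "lndist b a \<le> ereal \<epsilon>" using assms unfolding lndist_def by (auto simp: abs_minus_commute)
  then show ?thesis using lndist_1[OF assms(1,2)] by auto
qed

lemma d_opt_le:
  assumes "d_opt A B \<le> ereal \<epsilon>" "is_struct C"
  shows "lndist (opt A C) (opt B C) \<le> ereal \<epsilon>"
proof -
  have "lndist (opt A C) (opt B C) \<le> d_opt A B"
    unfolding d_opt_def using assms(2) by (intro SUP_upper) auto
  then show ?thesis using assms(1) by auto
qed


lemma arith_main:
  fixes N n m a :: nat
  assumes "N \<ge> 1" "n \<ge> 1" "8 * n * N \<le> m" "3 * m \<le> 4 * a"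
  shows "N ^ n * 3 ^ m < 2 ^ m * 2 ^ a"
proof -
  have N1: "N ^ (8 * n) < 2 ^ (N * (8 * n))"
  proof -
    have "N < 2 ^ N" by simp
    then have "N ^ (8*n) < (2 ^ N) ^ (8*n)" using assms by (intro power_strict_mono) auto
    then show ?thesis by (simp add: power_mult)
  qed
  have N2: "N ^ (8 * n) < 2 ^ m"
  proof -
    have "N * (8*n) \<le> m" using assms by (simp add: mult.commute mult.left_commute)
    then have "(2::nat) ^ (N * (8*n)) \<le> 2 ^ m" by (intro power_increasing) auto
    then show ?thesis using N1 by linarith
  qed
  have e1: "(3::nat) ^ (m * 8) = 6561 ^ m"
  proof -
    have "(3::nat) ^ (m * 8) = (3 ^ 8) ^ m" by (metis power_mult mult.commute)
    then show ?thesis by simp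
  qed
  have "(N ^ n * 3 ^ m) ^ 8 = N ^ (8*n) * 6561 ^ m"
    by (simp add: power_mult_distrib power_mult[symmetric] mult.commute e1)
  also have "\<dots> < 2 ^ m * 6561 ^ m" using N2 by simp
  also have "\<dots> = (2 * 6561) ^ m" by (simp only: power_mult_distrib)
  also have "\<dots> \<le> 16384 ^ m" by (intro power_mono) auto
  also have "\<dots> = 2 ^ (14 * m)" by (simp only: power_mult) simp
  also have "\<dots> \<le> 2 ^ (8 * m + 8 * a)" using assms by (intro power_increasing) auto
  also have "\<dots> = (2 ^ m * 2 ^ a) ^ 8" by (simp add: power_add power_mult_distrib power_mult[symmetric] mult.commute)
  finally show ?thesis by (rule power_less_imp_less_base) simp
qed


theorem lemma43:
  assumes "\<forall>G\<in>\<G>. is_graph G"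
    and "unbounded_avg_degree \<G>"
  shows "\<not> size_pliable (orientations \<G>)"
proof
  assume sp: "size_pliable (orientations \<G>)"
  define \<epsilon> :: real where "\<epsilon> = 1/10"
  obtain k where kB: "\<forall>A\<in>orientations \<G>. \<exists>B. is_struct B \<and> card (dom_s B) \<le> k \<and> d_opt A B \<le> ereal \<epsilon>"
    using sp unfolding size_pliable_def \<epsilon>_def by force
  define N where "N = TT k"
  have N1: "N \<ge> 1" using TT_pos N_def by (simp add: Suc_le_eq)
  obtain G where G: "G \<in> \<G>" "avg_degree G > 16 * real N"
    using assms(2) unfolding unbounded_avg_degree_def by blast
  define V where "V = fst G"
  define E where "E = snd G"
  define n where "n = card V"
  define m where "m = card E"
  have fV: "finite V" and EV: "\<forall>e\<in>E. e \<subseteq> V \<and> card e = 2"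
    using assms(1) G(1) unfolding is_graph_def V_def E_def by auto
  have fE: "finite E" using EV fV by (meson Pow_iff finite_Pow_iff rev_finite_subset subsetI)
  have avg: "2 * real m / real n > 16 * real N"
    using G(2) unfolding avg_degree_def m_def n_def V_def E_def by simp
  have n1: "n \<ge> 1"
  proof (rule ccontr)
    assume "\<not> n \<ge> 1" then have "n = 0" by simp
    then show False using avg N1 by simp
  qed
  have "2 * real m > 16 * real N * real n" using avg n1 by (simp add: field_simps)
  then have "real (8 * n * N) < real m" by (simp add: mult.commute mult.left_commute)
  then have mbig: "8 * n * N \<le> m" by linarith
  have m1: "m \<ge> 1" using mbig n1 N1
    by (metis le_trans mult_le_mono nat_mult_1 one_le_numeral)
  define s where "s h e b = (if b then uu (h (Min e)) (h (Max e)) else uu (h (Max e)) (h (Min e)))"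
    for h :: "nat \<Rightarrow> nat" and e :: "nat set" and b
  have s1: "\<forall>e\<in>E. s h e True + s h e False \<le> 1" for h
    unfolding s_def using uu_sum by auto
  define a where "a = m - m div 4"
  have a4: "3 * m \<le> 4 * a" unfolding a_def by linarith
  define Bad where "Bad = (\<Union>h\<in>PiE V (\<lambda>_. {..<N}). {\<sigma>\<in>PiE E (\<lambda>_. UNIV). a \<le> (\<Sum>e\<in>E. s h e (\<sigma> e))})"
  have finH: "finite (PiE V (\<lambda>_. {..<N}))" using fV by (simp add: finite_PiE)
  have finS: "finite (PiE E (\<lambda>_. UNIV::bool set))" using fE by (simp add: finite_PiE)
  have "card Bad * 2 ^ a \<le> (\<Sum>h\<in>PiE V (\<lambda>_. {..<N}). card {\<sigma>\<in>PiE E (\<lambda>_. UNIV). a \<le> (\<Sum>e\<in>E. s h e (\<sigma> e))}) * 2 ^ a"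
    unfolding Bad_def by (intro mult_right_mono card_UN_le finH) auto
  also have "\<dots> = (\<Sum>h\<in>PiE V (\<lambda>_. {..<N}). card {\<sigma>\<in>PiE E (\<lambda>_. UNIV). a \<le> (\<Sum>e\<in>E. s h e (\<sigma> e))} * 2 ^ a)"
    by (simp add: sum_distrib_right)
  also have "\<dots> \<le> (\<Sum>h\<in>PiE V (\<lambda>_. {..<N}). 3 ^ m)"
    unfolding m_def by (intro sum_mono count_bad fE s1)
  also have "\<dots> = N ^ n * 3 ^ m" using fV by (simp add: card_PiE n_def)
  also have "\<dots> < 2 ^ m * 2 ^ a" by (rule arith_main[OF N1 n1 mbig a4])
  finally have "card Bad < 2 ^ m" by simp
  moreover have "card (PiE E (\<lambda>_. UNIV::bool set)) = 2 ^ m" using fE by (simp add: card_PiE m_def)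
  moreover have "Bad \<subseteq> PiE E (\<lambda>_. UNIV::bool set)" unfolding Bad_def by auto
  ultimately have "\<not> PiE E (\<lambda>_. UNIV::bool set) \<subseteq> Bad"
    by (metis card_mono finS finite_subset not_le)
  then obtain \<sigma> where \<sigma>: "\<sigma> \<in> PiE E (\<lambda>_. UNIV::bool set)" "\<sigma> \<notin> Bad"
    by blast
  have good: "(\<Sum>e\<in>E. s h e (\<sigma> e)) < a" if "h \<in> PiE V (\<lambda>_. {..<N})" for h
    using \<sigma> that unfolding Bad_def by auto
  define A where "A = (V, orient E \<sigma>)"
  have dA: "dom_s A = V" and eA: "e_s A = orient E \<sigma>" unfolding A_def dom_s_def e_s_def by auto
  have o01: "orient E \<sigma> x y \<in> {0, 1}" for x y unfolding orient_def by auto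
  have Vne: "V \<noteq> {}" using n1 n_def by auto
  have structA: "is_struct A" unfolding is_struct_def dA eA using fV Vne o01 by (auto simp: orient_def)
  have orA: "is_orientation A G"
    unfolding is_orientation_def dA eA V_def[symmetric] E_def[symmetric]
  proof (intro conjI ballI impI)
    fix u v assume "u \<in> V" "v \<in> V"
    show "orient E \<sigma> u v \<in> {0, 1}" by (rule o01)
  next
    fix u v assume "u \<in> V" "v \<in> V" "{u, v} \<notin> E"
    then show "orient E \<sigma> u v = 0" unfolding orient_def by auto
  next
    fix u v assume uv: "u \<in> V" "v \<in> V" "{u, v} \<in> E"
    then have "u \<noteq> v" using EV by fastforce
    moreover have "{v, u} = {u, v}" by auto
    ultimately show "orient E \<sigma> u v + orient E \<sigma> v u = 1" unfolding orient_def using uv by auto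
  qed simp
  have "A \<in> orientations \<G>" unfolding orientations_def using orA G(1) by auto
  then obtain B where B: "is_struct B" "card (dom_s B) \<le> k" "d_opt A B \<le> ereal \<epsilon>" using kB by blast
  have fB: "finite (dom_s B)" and nB: "\<forall>x\<in>dom_s B. \<forall>y\<in>dom_s B. e_s B x y \<ge> 0"
    using B(1) unfolding is_struct_def by auto
  have conv1: "(\<Sum>(x,y)\<in>V \<times> V. orient E \<sigma> x y * F x y) =
         (\<Sum>e\<in>E. if \<sigma> e then F (Min e) (Max e) else F (Max e) (Min e))" for F
    by (rule conv[OF fV EV])
  have "(\<Sum>(x,y)\<in>V \<times> V. orient E \<sigma> x y * orient E \<sigma> x y) = (\<Sum>(x,y)\<in>V \<times> V. orient E \<sigma> x y * 1)"
    by (intro sum.cong refl) (auto simp: orient_def)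
  also have "\<dots> = of_nat m" unfolding conv1 m_def by simp
  finally have s0: "(\<Sum>(x,y)\<in>V \<times> V. orient E \<sigma> x y * orient E \<sigma> x y) = of_nat m" .
  have "(\<Sum>(x,y)\<in>dom_s A \<times> dom_s A. e_s A x y * e_s A ((\<lambda>x\<in>V. x) x) ((\<lambda>x\<in>V. x) y))
      = (\<Sum>(x,y)\<in>V \<times> V. orient E \<sigma> x y * orient E \<sigma> x y)"
    unfolding dA eA by (intro sum.cong refl) auto
  then have sumAA: "(\<Sum>(x,y)\<in>dom_s A \<times> dom_s A. e_s A x y * e_s A ((\<lambda>x\<in>V. x) x) ((\<lambda>x\<in>V. x) y)) = of_nat m"
    using s0 by simp
  have "real_of_rat (of_nat m) \<le> opt A A"
    using opt_ge[of A A "\<lambda>x\<in>V. x"] sumAA fV dA by auto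
  then have optAA: "real m \<le> opt A A" by simp
  have mpos: "real m > 0" using m1 by simp
  have l1: "lndist (opt A A) (opt B A) \<le> ereal \<epsilon>" by (rule d_opt_le[OF B(3) structA])
  have "opt B A > 0 \<and> exp (- \<epsilon>) * opt A A \<le> opt B A"
    by (rule lndist_1) (use optAA mpos opt_nonneg[OF B(1) structA] l1 in auto)
  then have optBA: "exp (- \<epsilon>) * real m \<le> opt B A"
    using optAA by (smt (verit) exp_gt_zero mult_left_mono)
  obtain f where f: "f \<in> dom_s B \<rightarrow>\<^sub>E V" and fval:
    "opt B A = real_of_rat (\<Sum>(x,y)\<in>dom_s B \<times> dom_s B. e_s B x y * orient E \<sigma> (f x) (f y))"
    using opt_attained[of B A] fB fV Vne dA eA by auto
  define S where "S = f ` dom_s B"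
  define R where "R = (\<lambda>x y. x \<in> S \<and> y \<in> S \<and> orient E \<sigma> x y = 1)"
  have finSS: "finite S" using fB S_def by auto
  have cS: "card S \<le> k" using B(2) card_image_le[OF fB, of f] S_def by simp
  have Rok: "\<forall>x y. R x y \<longrightarrow> x \<in> S \<and> y \<in> S \<and> x \<noteq> y \<and> \<not> R y x"
  proof (intro allI impI)
    fix x y assume r: "R x y"
    then have xy: "{x, y} \<in> E" "\<sigma> {x, y} = (x < y)" unfolding R_def orient_def
      by (auto split: if_splits)
    then have "x \<noteq> y" using EV by fastforce
    moreover have "{y, x} = {x, y}" by auto
    ultimately show "x \<in> S \<and> y \<in> S \<and> x \<noteq> y \<and> \<not> R y x"
      using r xy unfolding R_def orient_def by auto
  qed
  obtain g where g: "g ` S \<subseteq> {..<TT k}" "\<forall>x\<in>S. \<forall>y\<in>S. R x y \<longrightarrow> uu (g x) (g y) = 1"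
    using universal[OF finSS cS Rok] by blast
  define U where "U = ({..<N}, \<lambda>x y. (of_nat (uu x y) :: rat))"
  have dU: "dom_s U = {..<N}" and eU: "e_s U = (\<lambda>x y. of_nat (uu x y))"
    unfolding U_def dom_s_def e_s_def by auto
  have structU: "is_struct U" unfolding is_struct_def dU eU using N1 by (auto simp: lessThan_empty_iff)
  have hB: "(\<lambda>i\<in>dom_s B. g (f i)) \<in> dom_s B \<rightarrow>\<^sub>E dom_s U"
    using g(1) f S_def dU N_def by auto
  have "opt B A \<le> real_of_rat (\<Sum>(x,y)\<in>dom_s B \<times> dom_s B.
            e_s B x y * e_s U ((\<lambda>i\<in>dom_s B. g (f i)) x) ((\<lambda>i\<in>dom_s B. g (f i)) y))"
    unfolding fval of_rat_less_eq
  proof (intro sum_mono)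
    fix p assume p: "p \<in> dom_s B \<times> dom_s B"
    obtain x y where xy: "p = (x, y)" by fastforce
    have x: "x \<in> dom_s B" and y: "y \<in> dom_s B" using p xy by auto
    have "orient E \<sigma> (f x) (f y) \<le> of_nat (uu (g (f x)) (g (f y)))"
    proof (cases "orient E \<sigma> (f x) (f y) = 1")
      case True
      then have "R (f x) (f y)" unfolding R_def S_def using x y by auto
      then have "uu (g (f x)) (g (f y)) = 1" using g(2) Rok by blast
      then show ?thesis using True by simp
    next
      case False
      then have "orient E \<sigma> (f x) (f y) = 0" using o01 by auto
      then show ?thesis by simp
    qed
    then show "(case p of (x, y) \<Rightarrow> e_s B x y * orient E \<sigma> (f x) (f y))
        \<le> (case p of (x, y) \<Rightarrow> e_s B x y * e_s U ((\<lambda>i\<in>dom_s B. g (f i)) x) ((\<lambda>i\<in>dom_s B. g (f i)) y))"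
      using xy x y nB eU by (auto intro: mult_left_mono)
  qed
  also have "\<dots> \<le> opt B U" by (rule opt_ge[OF fB _ hB]) (simp add: dU)
  finally have optBU: "exp (- \<epsilon>) * real m \<le> opt B U" using optBA by linarith
  have optBUpos: "opt B U > 0" using optBU mpos by (smt (verit) exp_gt_zero mult_pos_pos)
  have l2: "lndist (opt A U) (opt B U) \<le> ereal \<epsilon>" by (rule d_opt_le[OF B(3) structU])
  have optAU: "exp (- \<epsilon>) * opt B U \<le> opt A U"
    by (rule lndist_2[OF optBUpos opt_nonneg[OF structA structU] l2])
  have "exp (- \<epsilon>) * (exp (- \<epsilon>) * real m) \<le> exp (- \<epsilon>) * opt B U"
    using optBU by (intro mult_left_mono) auto
  then have low: "exp (- 2 * \<epsilon>) * real m \<le> opt A U"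
    using optAU by (simp add: mult.assoc[symmetric] exp_add[symmetric])
  obtain h where h: "h \<in> V \<rightarrow>\<^sub>E {..<N}" and hval:
    "opt A U = real_of_rat (\<Sum>(x,y)\<in>V \<times> V. orient E \<sigma> x y * of_nat (uu (h x) (h y)))"
    using opt_attained[of A U] fV dA eA dU eU N1 by (auto simp: lessThan_empty_iff)
  have "(\<Sum>(x,y)\<in>V \<times> V. orient E \<sigma> x y * (of_nat (uu (h x) (h y)) :: rat))
        = (\<Sum>e\<in>E. of_nat (s h e (\<sigma> e)))"
    unfolding conv1 by (intro sum.cong refl) (auto simp: s_def)
  also have "\<dots> = of_nat (\<Sum>e\<in>E. s h e (\<sigma> e))" by simp
  finally have eqs: "(\<Sum>(x,y)\<in>V \<times> V. orient E \<sigma> x y * (of_nat (uu (h x) (h y)) :: rat))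
        = of_nat (\<Sum>e\<in>E. s h e (\<sigma> e))" .
  have "opt A U = real_of_rat (of_nat (\<Sum>e\<in>E. s h e (\<sigma> e)))" using hval eqs by (simp only:)
  then have "opt A U = real (\<Sum>e\<in>E. s h e (\<sigma> e))" by (simp only: of_rat_of_nat_eq)
  moreover have "(\<Sum>e\<in>E. s h e (\<sigma> e)) < a" using good h by auto
  ultimately have "opt A U \<le> real a - 1"
  proof -
    assume o: "opt A U = real (\<Sum>e\<in>E. s h e (\<sigma> e))" and l: "(\<Sum>e\<in>E. s h e (\<sigma> e)) < a"
    from l have "real (\<Sum>e\<in>E. s h e (\<sigma> e)) \<le> real a - 1" by (simp only: of_nat_less_iff[symmetric])
    then show ?thesis using o by (simp only:)
  qed
  moreover have "4 * (real a - 1) < 3 * real m"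
  proof -
    have "4 * a < 3 * m + 4" unfolding a_def by linarith
    then have "real (4 * a) < real (3 * m + 4)" by (simp only: of_nat_less_iff)
    then show ?thesis by simp
  qed
  ultimately have up: "4 * opt A U < 3 * real m" by (smt (verit))
  have "1 + (- 2 * \<epsilon>) \<le> exp (- 2 * \<epsilon>)" by (rule exp_ge_add_one_self)
  then have "4/5 \<le> exp (- 2 * \<epsilon>)" unfolding \<epsilon>_def by simp
  then have "4/5 * real m \<le> exp (- 2 * \<epsilon>) * real m" using mpos by (intro mult_right_mono) auto
  then show False using low up mpos by linarith
qed

end
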